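(* For any single-elimination tournament $\mathcal{T}$ and any two distinct players $a,b$, there exists a unique match $x$ of $\mathcal{T}$ which has in-neighbours $u_a,u_b\in N^-(x)$ satisfying $P(u_a)\cap\{a,b\}=\{a\}$ and $P(u_b)\cap\{a,b\}=\{b\}$.
   Context: A single-elimination tournament is a finite directed graph $\mathcal{T}$ such that: (a) $\mathcal{T}$ has exactly one sink (vertex with no out-neighbours); (b) every non-sink vertex has exactly one out-neighbour; (c) $\mathcal{T}$ has no directed cycles; (d) $|N^-(v)|\ne 1$ for every vertex $v$, where $N^-(v)$ denotes the set of in-neighbours of $v$. The players are the sources (vertices with no in-neighbours) and the matches are the non-source vertices. For a vertex $u$, $P(u)$ is the set of players $a$ for which there is a directed walk from $a$ to $u$ (a sequence $(u_1,\dots,u_t)$, $t\ge1$, $u_1=a$, $u_t=u$, each $u_{i+1}$ an out-neighbour of $u_i$). *)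

theory Defs
  imports Main
begin

definition out_nbrs :: "('a \<times> 'a) set \<Rightarrow> 'a \<Rightarrow> 'a set" where
  "out_nbrs E v = {w. (v, w) \<in> E}"

definition in_nbrs :: "('a \<times> 'a) set \<Rightarrow> 'a \<Rightarrow> 'a set" where
  "in_nbrs E v = {u. (u, v) \<in> E}"

definition single_elim_tournament :: "'a set \<Rightarrow> ('a \<times> 'a) set \<Rightarrow> bool" where
  "single_elim_tournament V E \<longleftrightarrow>
     finite V \<and> E \<subseteq> V \<times> V \<and>
     (\<exists>!s. s \<in> V \<and> out_nbrs E s = {}) \<and>
     (\<forall>v\<in>V. out_nbrs E v \<noteq> {} \<longrightarrow> card (out_nbrs E v) = 1) \<and>
     (\<forall>v. (v, v) \<notin> E\<^sup>+) \<and>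
     (\<forall>v\<in>V. card (in_nbrs E v) \<noteq> 1)"

definition players :: "'a set \<Rightarrow> ('a \<times> 'a) set \<Rightarrow> 'a set" where
  "players V E = {v \<in> V. in_nbrs E v = {}}"

definition matches :: "'a set \<Rightarrow> ('a \<times> 'a) set \<Rightarrow> 'a set" where
  "matches V E = V - players V E"

definition P :: "'a set \<Rightarrow> ('a \<times> 'a) set \<Rightarrow> 'a \<Rightarrow> 'a set" where
  "P V E u = {a \<in> players V E. (a, u) \<in> E\<^sup>*}"

end

theory Submission
  imports Defs
begin

lemma set_functional:
  assumes "single_elim_tournament V E" "(v,w) \<in> E" "(v,w') \<in> E"
  shows "w = w'"
proof -
  have VE: "E \<subseteq> V \<times> V" and c: "\<forall>v\<in>V. out_nbrs E v \<noteq> {} \<longrightarrow> card (out_nbrs E v) = 1"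
    using assms(1) unfolding single_elim_tournament_def by auto
  have "v \<in> V" using VE assms(2) by auto
  moreover have "w \<in> out_nbrs E v" "w' \<in> out_nbrs E v" using assms by (auto simp: out_nbrs_def)
  ultimately have "card (out_nbrs E v) = 1" using c by auto
  then obtain z where "out_nbrs E v = {z}" using card_1_singletonE by blast
  thus ?thesis using \<open>w \<in> out_nbrs E v\<close> \<open>w' \<in> out_nbrs E v\<close> by auto
qed

lemma set_chain:
  assumes T: "single_elim_tournament V E" and au: "(a,u) \<in> E\<^sup>*" and av: "(a,v) \<in> E\<^sup>*"
  shows "(u,v) \<in> E\<^sup>* \<or> (v,u) \<in> E\<^sup>*"
  using au
proof (induction rule: rtrancl_induct)
  case base
  then show ?case using av by blast
next
  case (step u u')
  from step.IH show ?case
  proof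
    assume "(u,v) \<in> E\<^sup>*"
    then show ?thesis
    proof (cases rule: converse_rtranclE)
      case base
      then show ?thesis using step by auto
    next
      case (step u'')
      have "u'' = u'" using set_functional[OF T] step \<open>(u,u') \<in> E\<close> by blast
      then show ?thesis using step by auto
    qed
  next
    assume "(v,u) \<in> E\<^sup>*"
    then show ?thesis using step by (meson rtrancl.rtrancl_into_rtrancl)
  qed
qed

lemma set_pred_unique:
  assumes T: "single_elim_tournament V E" and "(a,u) \<in> E\<^sup>*" "(a,w) \<in> E\<^sup>*"
    "(u,x) \<in> E" "(w,x) \<in> E"
  shows "u = w"
proof -
  have acyc: "\<forall>v. (v, v) \<notin> E\<^sup>+" using T unfolding single_elim_tournament_def by auto
  have gen: "u = w" if h: "(u,w) \<in> E\<^sup>*" "(u,x) \<in> E" "(w,x) \<in> E" for u w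
  proof (rule ccontr)
    assume "u \<noteq> w"
    with h(1) obtain y where "(u,y) \<in> E" "(y,w) \<in> E\<^sup>*"
      by (metis converse_rtranclE)
    then have "y = x" using set_functional[OF T] h(2) by blast
    then have "(w,w) \<in> E\<^sup>+" using \<open>(y,w) \<in> E\<^sup>*\<close> h(3)
      by (meson rtrancl_into_trancl2)
    with acyc show False by blast
  qed
  from set_chain[OF T assms(2,3)] show ?thesis
    using gen assms(4,5) by metis
qed

lemma reach_sink:
  assumes T: "single_elim_tournament V E" and s: "s \<in> V" "out_nbrs E s = {}"
  shows "v \<in> V \<Longrightarrow> (v,s) \<in> E\<^sup>*"
proof -
  have fin: "finite V" and VE: "E \<subseteq> V \<times> V" and acyc: "\<forall>v. (v, v) \<notin> E\<^sup>+"
    and us: "\<exists>!s. s \<in> V \<and> out_nbrs E s = {}"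
    using T unfolding single_elim_tournament_def by auto
  have "finite E" using fin VE by (meson finite_SigmaI finite_subset)
  moreover have "acyclic E" using acyc by (simp add: acyclic_def)
  ultimately have wf: "wf (E\<inverse>)" by (rule finite_acyclic_wf_converse)
  show "v \<in> V \<Longrightarrow> (v,s) \<in> E\<^sup>*"
  proof (induction v rule: wf_induct_rule[OF wf])
    case (1 v)
    show ?case
    proof (cases "out_nbrs E v = {}")
      case True
      then have "v = s" using us s 1(2) by blast
      then show ?thesis by simp
    next
      case False
      then obtain w where w: "(v,w) \<in> E" by (auto simp: out_nbrs_def)
      then have "w \<in> V" using VE by auto
      with 1(1) w have "(w,s) \<in> E\<^sup>*" by blast
      with w show ?thesis by (meson converse_rtrancl_into_rtrancl)
    qed
  qed
qed

theorem lemma4p2: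
  assumes "single_elim_tournament V E"
    and "a \<in> players V E" and "b \<in> players V E" and "a \<noteq> b"
  shows "\<exists>!x. x \<in> matches V E \<and>
           (\<exists>ua ub. ua \<in> in_nbrs E x \<and> ub \<in> in_nbrs E x \<and>
                    P V E ua \<inter> {a, b} = {a} \<and> P V E ub \<inter> {a, b} = {b})"
proof -
  note T = assms(1)
  have fin: "finite V" and VE: "E \<subseteq> V \<times> V" and acyc: "\<forall>v. (v, v) \<notin> E\<^sup>+"
    and us: "\<exists>!s. s \<in> V \<and> out_nbrs E s = {}"
    using T unfolding single_elim_tournament_def by auto
  have "finite E" using fin VE by (meson finite_SigmaI finite_subset)
  moreover have "acyclic E" using acyc by (simp add: acyclic_def)
  ultimately have wfE: "wf E" by (rule finite_acyclic_wf)
  obtain s where s: "s \<in> V" "out_nbrs E s = {}" using us by blast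
  have aV: "a \<in> V" and bV: "b \<in> V" and ain: "\<And>u. (u,a) \<notin> E" and bin: "\<And>u. (u,b) \<notin> E"
    using assms(2,3) by (auto simp: players_def in_nbrs_def)
  have Pa: "a \<in> P V E u \<longleftrightarrow> (a,u) \<in> E\<^sup>*" for u using assms(2) by (simp add: P_def)
  have Pb: "b \<in> P V E u \<longleftrightarrow> (b,u) \<in> E\<^sup>*" for u using assms(3) by (simp add: P_def)
  have key: "P V E u \<inter> {a, b} = {a} \<longleftrightarrow> (a,u) \<in> E\<^sup>* \<and> (b,u) \<notin> E\<^sup>*"
    and key2: "P V E u \<inter> {a, b} = {b} \<longleftrightarrow> (b,u) \<in> E\<^sup>* \<and> (a,u) \<notin> E\<^sup>*" for u
    using Pa[of u] Pb[of u] assms(4) by auto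
  define C where "C = {y. (a,y) \<in> E\<^sup>* \<and> (b,y) \<in> E\<^sup>*}"
  have "s \<in> C" using reach_sink[OF T s] aV bV by (simp add: C_def)
  then obtain x where xC: "x \<in> C" and xmin: "\<And>y. (y,x) \<in> E \<Longrightarrow> y \<notin> C"
    using wfE_min[OF wfE] by metis
  have ax: "(a,x) \<in> E\<^sup>*" and bx: "(b,x) \<in> E\<^sup>*" using xC by (auto simp: C_def)
  have "x \<noteq> a"
  proof
    assume "x = a"
    with bx assms(4) have "(b,a) \<in> E\<^sup>+" by (metis rtranclD)
    then obtain y where "(y,a) \<in> E" by (meson tranclD2)
    with ain show False by blast
  qed
  with ax have "(a,x) \<in> E\<^sup>+" by (metis rtranclD)
  then obtain ua where ua: "(a,ua) \<in> E\<^sup>*" "(ua,x) \<in> E" by (meson tranclD2)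
  have "x \<noteq> b"
  proof
    assume "x = b"
    with ax assms(4) have "(a,b) \<in> E\<^sup>+" by (metis rtranclD)
    then obtain y where "(y,b) \<in> E" by (meson tranclD2)
    with bin show False by blast
  qed
  with bx have "(b,x) \<in> E\<^sup>+" by (metis rtranclD)
  then obtain ub where ub: "(b,ub) \<in> E\<^sup>*" "(ub,x) \<in> E" by (meson tranclD2)
  have uaC: "ua \<notin> C" "ub \<notin> C" using xmin ua ub by auto
  have xM: "x \<in> matches V E"
    using ua VE by (auto simp: matches_def players_def in_nbrs_def)
  have ex: "x \<in> matches V E \<and>
           (\<exists>ua ub. ua \<in> in_nbrs E x \<and> ub \<in> in_nbrs E x \<and>
                    P V E ua \<inter> {a, b} = {a} \<and> P V E ub \<inter> {a, b} = {b})"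
    using xM ua ub uaC unfolding key key2 by (auto simp: in_nbrs_def C_def)
  show ?thesis
  proof (rule ex1I[of _ x])
    show "x \<in> matches V E \<and>
           (\<exists>ua ub. ua \<in> in_nbrs E x \<and> ub \<in> in_nbrs E x \<and>
                    P V E ua \<inter> {a, b} = {a} \<and> P V E ub \<inter> {a, b} = {b})" by (rule ex)
  next
    fix x'
    assume "x' \<in> matches V E \<and>
           (\<exists>ua ub. ua \<in> in_nbrs E x' \<and> ub \<in> in_nbrs E x' \<and>
                    P V E ua \<inter> {a, b} = {a} \<and> P V E ub \<inter> {a, b} = {b})"
    then obtain va vb where va: "(va,x') \<in> E" "(a,va) \<in> E\<^sup>*" "(b,va) \<notin> E\<^sup>*"
      and vb: "(vb,x') \<in> E" "(b,vb) \<in> E\<^sup>*" "(a,vb) \<notin> E\<^sup>*"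
      unfolding key key2 by (auto simp: in_nbrs_def)
    have ax': "(a,x') \<in> E\<^sup>*" using va by auto
    have bx': "(b,x') \<in> E\<^sup>*" using vb by auto
    show "x' = x"
    proof (rule ccontr)
      assume ne: "x' \<noteq> x"
      from set_chain[OF T ax ax'] show False
      proof
        assume "(x,x') \<in> E\<^sup>*"
        with ne have "(x,x') \<in> E\<^sup>+" by (metis rtranclD)
        then obtain w where w: "(x,w) \<in> E\<^sup>*" "(w,x') \<in> E" by (meson tranclD2)
        have "(a,w) \<in> E\<^sup>*" "(b,w) \<in> E\<^sup>*" using w ax bx by auto
        moreover have "va = w" using set_pred_unique[OF T va(2) \<open>(a,w) \<in> E\<^sup>*\<close> va(1) w(2)] .
        ultimately show False using va(3) by simp
      next
        assume "(x',x) \<in> E\<^sup>*"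
        with ne have "(x',x) \<in> E\<^sup>+" by (metis rtranclD)
        then obtain y where y: "(x',y) \<in> E\<^sup>*" "(y,x) \<in> E" by (meson tranclD2)
        have "y \<in> C" using y ax' bx' by (auto simp: C_def)
        with xmin y show False by blast
      qed
    qed
  qed
qed

end
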